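(* Let $c>0,\Delta>0$ be universal constants such that for all $A\ge0$, $\sigma>0$, all $m_1,m_2$, all $x$ with $|m_1(x)-m_2(x)|/\sqrt{\sigma^2+A}\le\Delta$ and all $t$, one has $\frac12[L(t;m_1,A\mid x)+L(t;m_2,A\mid x)]\ge c\frac{\sigma^4}{(\sigma^2+A)^2}(m_1(x)-m_2(x))^2$. Then for all $m_1,m_2:\mathcal{X}\to\mathbb{R}$ and any $t:\mathcal{X}\times\mathbb{R}\to\mathbb{R}$, writing $$R:=c\,\frac{\sigma^4}{(\sigma^2+A)^2}\int\big(m_1(x)-m_2(x)\big)^2\,\mathbf{1}\Big\{\frac{(m_1(x)-m_2(x))^2}{\sigma^2+A}\le\Delta^2\Big\}\,d\mathbb{P}^X(x),$$ the implication $L(t;m_1,A)<R\ \Longrightarrow\ L(t;m_2,A)\ge R$ holds.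
   Context: Model: $X\sim\mathbb{P}^X$, $\mu\mid X\sim N(m(X),A)$, $Z\mid\mu\sim N(\mu,\sigma^2)$. Bayes rule $t^*_{m,A}(x,z)=\frac{A}{\sigma^2+A}z+\frac{\sigma^2}{\sigma^2+A}m(x)$. Pointwise excess risk $L(t;m,A\mid x)=\mathbb{E}_{m,A}[(t(x,Z)-\mu)^2-(t^*_{m,A}(x,Z)-\mu)^2\mid X=x]$, and $L(t;m,A)=\int L(t;m,A\mid x)\,d\mathbb{P}^X(x)$ (the excess risk of $t$ over the Bayes rule for a fresh draw $(X,\mu,Z)$). Such constants $c,\Delta$ exist (Lemma 2 of the paper). *)

theory Defs
  imports "HOL-Probability.Probability"
begin

definition gauss :: "real \<Rightarrow> real \<Rightarrow> real measure" where
  "gauss mu v = (if v = 0 then return borel mu else density lborel (normal_density mu (sqrt v)))"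

definition joint_law :: "real \<Rightarrow> ('a \<Rightarrow> real) \<Rightarrow> real \<Rightarrow> 'a \<Rightarrow> (real \<times> real) measure" where
  "joint_law \<sigma> m A x =
     gauss (m x) A \<bind> (\<lambda>\<mu>. gauss \<mu> (\<sigma>\<^sup>2) \<bind> (\<lambda>z. return (borel \<Otimes>\<^sub>M borel) (\<mu>, z)))"

definition bayes_rule :: "real \<Rightarrow> ('a \<Rightarrow> real) \<Rightarrow> real \<Rightarrow> 'a \<Rightarrow> real \<Rightarrow> real" where
  "bayes_rule \<sigma> m A x z = A / (\<sigma>\<^sup>2 + A) * z + \<sigma>\<^sup>2 / (\<sigma>\<^sup>2 + A) * m x"

text \<open>Pointwise excess risk L(t; m, A | x), valued in [0, \<infinity>]: the Bayes risk is finite and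
  no larger than the risk of t, so the (truncated) ennreal difference is the exact difference.\<close>
definition pw_excess_risk :: "real \<Rightarrow> ('a \<Rightarrow> real \<Rightarrow> real) \<Rightarrow> ('a \<Rightarrow> real) \<Rightarrow> real \<Rightarrow> 'a \<Rightarrow> ennreal" where
  "pw_excess_risk \<sigma> t m A x =
     (\<integral>\<^sup>+ p. ennreal ((t x (snd p) - fst p)\<^sup>2) \<partial>joint_law \<sigma> m A x)
   - (\<integral>\<^sup>+ p. ennreal ((bayes_rule \<sigma> m A x (snd p) - fst p)\<^sup>2) \<partial>joint_law \<sigma> m A x)"

definition excess_risk :: "'a measure \<Rightarrow> real \<Rightarrow> ('a \<Rightarrow> real \<Rightarrow> real) \<Rightarrow> ('a \<Rightarrow> real) \<Rightarrow> real \<Rightarrow> ennreal" where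
  "excess_risk PX \<sigma> t m A = (\<integral>\<^sup>+ x. pw_excess_risk \<sigma> t m A x \<partial>PX)"

end

theory Submission
  imports Defs
begin

lemma gauss_prob: "v \<ge> 0 \<Longrightarrow> prob_space (gauss a v)"
  unfolding gauss_def by (auto simp: prob_space_return prob_space_normal_density)

lemma sets_gauss[simp, measurable_cong]: "sets (gauss a v) = sets borel"
  unfolding gauss_def by auto

lemma space_gauss[simp]: "space (gauss a v) = UNIV"
  using sets_eq_imp_space_eq[OF sets_gauss] by simp

lemma nn_integral_gauss_shift:
  assumes v: "v \<ge> 0" and f[measurable]: "f \<in> borel_measurable borel"
  shows "(\<integral>\<^sup>+y. f y \<partial>gauss a v) = (\<integral>\<^sup>+u. f (a + u) \<partial>gauss 0 v)"
proof (cases "v = 0")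
  case True then show ?thesis unfolding gauss_def by (simp add: nn_integral_return)
next
  case False
  let ?h = "\<lambda>y. ennreal (normal_density 0 (sqrt v) (y - a)) * f y"
  have "(\<integral>\<^sup>+y. f y \<partial>gauss a v) = (\<integral>\<^sup>+y. ?h y \<partial>lborel)"
    using False unfolding gauss_def
    by (simp add: nn_integral_density normal_density_def)
  also have "\<dots> = (\<integral>\<^sup>+y. ?h y \<partial>distr lborel borel ((+) a))"
    by (simp add: lborel_distr_plus)
  also have "\<dots> = (\<integral>\<^sup>+u. ?h (a + u) \<partial>lborel)"
    by (subst nn_integral_distr) auto
  also have "\<dots> = (\<integral>\<^sup>+u. f (a + u) \<partial>gauss 0 v)"
    using False unfolding gauss_def
    by (simp add: nn_integral_density normal_density_def)
  finally show ?thesis .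
qed

lemma gauss_distr:
  assumes v: "v \<ge> 0"
  shows "gauss a v = distr (gauss 0 v) borel ((+) a)"
proof (rule measure_eqI)
  fix X assume X: "X \<in> sets (gauss a v)"
  then have X': "X \<in> sets borel" by simp
  have "emeasure (gauss a v) X = (\<integral>\<^sup>+y. indicator X y \<partial>gauss a v)"
    using X by simp
  also have "\<dots> = (\<integral>\<^sup>+u. indicator X (a + u) \<partial>gauss 0 v)"
    using X' by (intro nn_integral_gauss_shift v) auto
  also have "\<dots> = emeasure (distr (gauss 0 v) borel ((+) a)) X"
  proof -
    have S: "(+) a -` X \<in> sets (gauss 0 v)" using measurable_sets_borel[of "(+) a" borel X] X' by simp
    have "(\<integral>\<^sup>+u. indicator X (a + u) \<partial>gauss 0 v) = (\<integral>\<^sup>+u. indicator ((+) a -` X) u \<partial>gauss 0 v)"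
      by (auto intro!: nn_integral_cong split: split_indicator)
    also have "\<dots> = emeasure (gauss 0 v) ((+) a -` X)" using S by simp
    finally show ?thesis using X' by (subst emeasure_distr) auto
  qed
  finally show "emeasure (gauss a v) X = emeasure (distr (gauss 0 v) borel ((+) a)) X" .
qed simp

lemma gauss_subprob: "v \<ge> 0 \<Longrightarrow> gauss a v \<in> space (subprob_algebra borel)"
  by (auto simp: space_subprob_algebra intro!: prob_space_imp_subprob_space gauss_prob)

lemma gauss_kernel_meas:
  assumes v: "v \<ge> 0"
  shows "(\<lambda>\<mu>. gauss \<mu> v) \<in> measurable borel (subprob_algebra borel)"
proof -
  have "(\<lambda>\<mu>. distr (gauss 0 v) borel ((+) \<mu>)) \<in> measurable borel (subprob_algebra borel)"
    by (rule measurable_distr2[where M=borel]) (auto intro: measurable_const gauss_subprob v)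
  then show ?thesis by (subst gauss_distr[OF v]) 
qed

lemma gauss_sf: "v \<ge> 0 \<Longrightarrow> sigma_finite_measure (gauss a v)"
  using gauss_prob prob_space_imp_sigma_finite by blast

lemma joint_integral:
  assumes A: "A \<ge> 0" and f[measurable]: "f \<in> borel_measurable (borel \<Otimes>\<^sub>M borel)"
  shows "(\<integral>\<^sup>+p. f p \<partial>joint_law \<sigma> m A x)
     = (\<integral>\<^sup>+u. (\<integral>\<^sup>+w. f (m x + u, m x + u + w) \<partial>gauss 0 (\<sigma>\<^sup>2)) \<partial>gauss 0 A)"
proof -
  have s2: "\<sigma>\<^sup>2 \<ge> 0" by simp
  define K where "K = (\<lambda>\<mu>. distr (gauss \<mu> (\<sigma>\<^sup>2)) (borel \<Otimes>\<^sub>M borel) (Pair \<mu>))"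
  have J: "joint_law \<sigma> m A x = gauss (m x) A \<bind> K"
    unfolding joint_law_def K_def
    by (intro bind_cong refl bind_return_distr') auto
  have Km: "K \<in> measurable borel (subprob_algebra (borel \<Otimes>\<^sub>M borel))"
    unfolding K_def
    by (rule measurable_distr2[where M=borel]) (auto intro: gauss_kernel_meas[OF s2])
  have Km': "K \<in> measurable (gauss (m x) A) (subprob_algebra (borel \<Otimes>\<^sub>M borel))"
    using Km by (simp cong: measurable_cong_sets)
  have g[measurable]: "(\<lambda>\<mu>. \<integral>\<^sup>+w. f (\<mu>, \<mu> + w) \<partial>gauss 0 (\<sigma>\<^sup>2)) \<in> borel_measurable borel"
  proof -
    have "(\<lambda>(\<mu>,w). f (\<mu>, \<mu> + w)) \<in> borel_measurable (borel \<Otimes>\<^sub>M gauss 0 (\<sigma>\<^sup>2))"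
      by (simp cong: measurable_cong_sets)
    from sigma_finite_measure.borel_measurable_nn_integral_fst[OF gauss_sf[OF s2] this]
    show ?thesis by simp
  qed
  have "(\<integral>\<^sup>+p. f p \<partial>joint_law \<sigma> m A x) = (\<integral>\<^sup>+\<mu>. \<integral>\<^sup>+p. f p \<partial>K \<mu> \<partial>gauss (m x) A)"
    unfolding J by (rule nn_integral_bind[OF f Km'])
  also have "\<dots> = (\<integral>\<^sup>+\<mu>. \<integral>\<^sup>+z. f (\<mu>, z) \<partial>gauss \<mu> (\<sigma>\<^sup>2) \<partial>gauss (m x) A)"
    unfolding K_def by (intro nn_integral_cong, subst nn_integral_distr) auto
  also have "\<dots> = (\<integral>\<^sup>+\<mu>. \<integral>\<^sup>+w. f (\<mu>, \<mu> + w) \<partial>gauss 0 (\<sigma>\<^sup>2) \<partial>gauss (m x) A)"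
    by (intro nn_integral_cong nn_integral_gauss_shift s2) auto
  also have "\<dots> = (\<integral>\<^sup>+u. (\<integral>\<^sup>+w. f (m x + u, m x + u + w) \<partial>gauss 0 (\<sigma>\<^sup>2)) \<partial>gauss 0 A)"
    by (rule nn_integral_gauss_shift[OF A g])
  finally show ?thesis .
qed

lemma meas_comp2:
  assumes gm: "(\<lambda>(x, z). g x z) \<in> borel_measurable (PX \<Otimes>\<^sub>M borel)"
    and f: "f \<in> measurable M PX" and h: "h \<in> borel_measurable M"
  shows "(\<lambda>y. g (f y) (h y)) \<in> borel_measurable M"
proof -
  have "(\<lambda>y. (f y, h y)) \<in> measurable M (PX \<Otimes>\<^sub>M borel)" using f h by measurable
  from measurable_compose[OF this gm] show ?thesis by simp
qed

lemma risk_meas: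
  assumes A: "A \<ge> 0" and gm: "(\<lambda>(x, z). g x z) \<in> borel_measurable (PX \<Otimes>\<^sub>M borel)"
    and mm[measurable]: "m \<in> borel_measurable PX"
  shows "(\<lambda>x. \<integral>\<^sup>+p. ennreal ((g x (snd p) - fst p)\<^sup>2) \<partial>joint_law \<sigma> m A x) \<in> borel_measurable PX"
proof -
  have s2: "\<sigma>\<^sup>2 \<ge> 0" by simp
  have gx: "g x \<in> borel_measurable borel" if "x \<in> space PX" for x
    using measurable_compose[OF measurable_Pair1'[OF that] gm] by simp
  have eq: "(\<integral>\<^sup>+p. ennreal ((g x (snd p) - fst p)\<^sup>2) \<partial>joint_law \<sigma> m A x)
     = (\<integral>\<^sup>+u. (\<integral>\<^sup>+w. ennreal ((g x (m x + u + w) - (m x + u))\<^sup>2) \<partial>gauss 0 (\<sigma>\<^sup>2)) \<partial>gauss 0 A)"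
    if "x \<in> space PX" for x
    using gx[OF that] by (subst joint_integral[OF A]) auto
  define F where "F = (\<lambda>((x, u), w). ennreal ((g x (m x + u + w) - (m x + u))\<^sup>2))"
  have Fm: "F \<in> borel_measurable ((PX \<Otimes>\<^sub>M gauss 0 A) \<Otimes>\<^sub>M gauss 0 (\<sigma>\<^sup>2))"
  proof -
    have "(\<lambda>y. g (fst (fst y)) (m (fst (fst y)) + snd (fst y) + snd y)) \<in> borel_measurable ((PX \<Otimes>\<^sub>M gauss 0 A) \<Otimes>\<^sub>M gauss 0 (\<sigma>\<^sup>2))"
      by (rule meas_comp2[OF gm]) (simp_all cong: measurable_cong_sets)
    then show ?thesis unfolding F_def by (simp add: case_prod_beta' cong: measurable_cong_sets)
  qed
  have F1: "(\<lambda>xu. \<integral>\<^sup>+w. F (xu, w) \<partial>gauss 0 (\<sigma>\<^sup>2)) \<in> borel_measurable (PX \<Otimes>\<^sub>M gauss 0 A)"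
    by (rule sigma_finite_measure.borel_measurable_nn_integral_fst[OF gauss_sf[OF s2] Fm])
  have F2: "(\<lambda>x. \<integral>\<^sup>+u. (\<integral>\<^sup>+w. F ((x, u), w) \<partial>gauss 0 (\<sigma>\<^sup>2)) \<partial>gauss 0 A) \<in> borel_measurable PX"
    using sigma_finite_measure.borel_measurable_nn_integral_fst[OF gauss_sf[OF A] F1] by simp
  show ?thesis
    by (rule measurable_cong[THEN iffD2, OF _ F2]) (simp add: eq F_def)
qed

lemma ennreal_two_half: "(a::ennreal) = 2 * (a / 2)"
  by (simp add: ennreal_times_divide ennreal_mult_divide_eq mult.commute[of 2])

lemma ennreal_sum_less: "(a::ennreal) < r \<Longrightarrow> b < r \<Longrightarrow> a + b < 2 * r"
  by (simp add: add_strict_mono mult_2)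

lemma pw_meas:
  assumes A: "A \<ge> 0" and tm: "(\<lambda>(x, z). t x z) \<in> borel_measurable (PX \<Otimes>\<^sub>M borel)"
    and mm[measurable]: "m \<in> borel_measurable PX"
  shows "(\<lambda>x. pw_excess_risk \<sigma> t m A x) \<in> borel_measurable PX"
proof -
  have bm: "(\<lambda>(x, z). bayes_rule \<sigma> m A x z) \<in> borel_measurable (PX \<Otimes>\<^sub>M borel)"
    unfolding bayes_rule_def by measurable
  show ?thesis unfolding pw_excess_risk_def
    using risk_meas[OF A tm mm, of \<sigma>] risk_meas[OF A bm mm, of \<sigma>] by measurable
qed

theorem lemma3:
  fixes PX :: "'a measure" and c \<Delta> \<sigma> A :: real
    and m1 m2 :: "'a \<Rightarrow> real" and t :: "'a \<Rightarrow> real \<Rightarrow> real"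
  assumes PX: "prob_space PX"
    and c_pos: "c > 0" and \<Delta>_pos: "\<Delta> > 0"
    and lemma2: "\<And>A' \<sigma>' (n1 :: 'a \<Rightarrow> real) n2 x (s :: 'a \<Rightarrow> real \<Rightarrow> real).
         A' \<ge> 0 \<Longrightarrow> \<sigma>' > 0 \<Longrightarrow> s x \<in> borel_measurable borel \<Longrightarrow>
         \<bar>n1 x - n2 x\<bar> / sqrt (\<sigma>'\<^sup>2 + A') \<le> \<Delta> \<Longrightarrow>
         (pw_excess_risk \<sigma>' s n1 A' x + pw_excess_risk \<sigma>' s n2 A' x) / 2
           \<ge> ennreal (c * \<sigma>' ^ 4 / (\<sigma>'\<^sup>2 + A')\<^sup>2 * (n1 x - n2 x)\<^sup>2)"
    and \<sigma>_pos: "\<sigma> > 0" and A_nonneg: "A \<ge> 0"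
    and m1_meas: "m1 \<in> borel_measurable PX" and m2_meas: "m2 \<in> borel_measurable PX"
    and t_meas: "(\<lambda>(x, z). t x z) \<in> borel_measurable (PX \<Otimes>\<^sub>M borel)"
  shows "let R = ennreal (c * \<sigma> ^ 4 / (\<sigma>\<^sup>2 + A)\<^sup>2) *
                 (\<integral>\<^sup>+ x. ennreal ((m1 x - m2 x)\<^sup>2 *
                     indicator {x. (m1 x - m2 x)\<^sup>2 / (\<sigma>\<^sup>2 + A) \<le> \<Delta>\<^sup>2} x) \<partial>PX)
         in excess_risk PX \<sigma> t m1 A < R \<longrightarrow> excess_risk PX \<sigma> t m2 A \<ge> R"
proof -
  define K where "K = c * \<sigma> ^ 4 / (\<sigma>\<^sup>2 + A)\<^sup>2"
  define S where "S = {x. (m1 x - m2 x)\<^sup>2 / (\<sigma>\<^sup>2 + A) \<le> \<Delta>\<^sup>2}"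
  define h where "h = (\<lambda>x. (m1 x - m2 x)\<^sup>2 * indicator S x :: real)"
  define R where "R = ennreal K * (\<integral>\<^sup>+ x. ennreal (h x) \<partial>PX)"
  have K0: "K \<ge> 0" unfolding K_def using c_pos by simp
  have h0: "h x \<ge> 0" for x unfolding h_def by (simp split: split_indicator)
  have sA: "\<sigma>\<^sup>2 + A > 0" using \<sigma>_pos A_nonneg by (simp add: add_pos_nonneg)
  let ?f1 = "\<lambda>x. pw_excess_risk \<sigma> t m1 A x"
  let ?f2 = "\<lambda>x. pw_excess_risk \<sigma> t m2 A x"
  have f1m: "?f1 \<in> borel_measurable PX" by (rule pw_meas[OF A_nonneg t_meas m1_meas])
  have f2m: "?f2 \<in> borel_measurable PX" by (rule pw_meas[OF A_nonneg t_meas m2_meas])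
  have pt: "2 * ennreal (K * h x) \<le> ?f1 x + ?f2 x" if x: "x \<in> space PX" for x
  proof (cases "x \<in> S")
    case True
    have tx: "t x \<in> borel_measurable borel"
      using measurable_compose[OF measurable_Pair1'[OF x] t_meas] by simp
    have "(m1 x - m2 x)\<^sup>2 / (\<sigma>\<^sup>2 + A) \<le> \<Delta>\<^sup>2" using True S_def by simp
    then have "sqrt ((m1 x - m2 x)\<^sup>2 / (\<sigma>\<^sup>2 + A)) \<le> sqrt (\<Delta>\<^sup>2)"
      using real_sqrt_le_mono by blast
    then have cond: "\<bar>m1 x - m2 x\<bar> / sqrt (\<sigma>\<^sup>2 + A) \<le> \<Delta>"
      using \<Delta>_pos by (simp add: real_sqrt_divide)
    have "ennreal (K * (m1 x - m2 x)\<^sup>2) \<le> (?f1 x + ?f2 x) / 2"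
      using lemma2[of A \<sigma> t x m1 m2, OF A_nonneg \<sigma>_pos tx cond] unfolding K_def by simp
    then have "2 * ennreal (K * (m1 x - m2 x)\<^sup>2) \<le> 2 * ((?f1 x + ?f2 x) / 2)"
      by (rule mult_left_mono) simp
    then show ?thesis using True unfolding h_def
      by (simp flip: ennreal_two_half)
  next
    case False
    then show ?thesis unfolding h_def by simp
  qed
  have "2 * R = (\<integral>\<^sup>+x. 2 * ennreal (K * h x) \<partial>PX)"
  proof -
    have hm: "(\<lambda>x. ennreal (h x)) \<in> borel_measurable PX"
      unfolding h_def S_def using m1_meas m2_meas by measurable
    have "(\<integral>\<^sup>+x. 2 * ennreal (K * h x) \<partial>PX) = (\<integral>\<^sup>+x. (2 * ennreal K) * ennreal (h x) \<partial>PX)"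
      using K0 h0 by (simp add: ennreal_mult mult.assoc)
    also have "\<dots> = 2 * ennreal K * (\<integral>\<^sup>+x. ennreal (h x) \<partial>PX)"
      by (rule nn_integral_cmult[OF hm])
    finally show ?thesis unfolding R_def by (simp add: mult.assoc)
  qed
  also have "\<dots> \<le> (\<integral>\<^sup>+x. ?f1 x + ?f2 x \<partial>PX)"
    by (rule nn_integral_mono) (rule pt)
  also have "\<dots> = excess_risk PX \<sigma> t m1 A + excess_risk PX \<sigma> t m2 A"
    unfolding excess_risk_def by (rule nn_integral_add[OF f1m f2m])
  finally have sum: "2 * R \<le> excess_risk PX \<sigma> t m1 A + excess_risk PX \<sigma> t m2 A" .
  have "excess_risk PX \<sigma> t m1 A < R \<longrightarrow> R \<le> excess_risk PX \<sigma> t m2 A"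
  proof (intro impI)
    assume l1: "excess_risk PX \<sigma> t m1 A < R"
    show "R \<le> excess_risk PX \<sigma> t m2 A"
    proof (rule ccontr)
      assume "\<not> R \<le> excess_risk PX \<sigma> t m2 A"
      then have "excess_risk PX \<sigma> t m2 A < R" by simp
      with l1 have "excess_risk PX \<sigma> t m1 A + excess_risk PX \<sigma> t m2 A < 2 * R"
        by (rule ennreal_sum_less)
      with sum show False by simp
    qed
  qed
  then show ?thesis unfolding Let_def R_def K_def h_def S_def by simp
qed

end
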